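(* Let $f$ be a symmetric probability density on $\mathbb R$ with distribution function $F$ and finite variance $\sigma^2(f)=\int_{\mathbb R}x^2f(x)\,dx>0$. Put $v(x)=\int_{-\infty}^x uf(u)\,du$ and $q(s)=\int_{-\infty}^s v(x)f(x)\,dx$. Then $$12\sup_{s\in\mathbb R}q^2(s)\le\sigma^2(f),$$ with equality if and only if $f$ is the uniform density on a symmetric interval $[-a,a]$ for some $a>0$. Equivalently, the integrated Kolmogorov statistic $\bar D_n=\sup_x\big|\sqrt n\int_{-\infty}^x(F_n(t)-F(t))\,dF(t)\big|$ is locally asymptotically optimal in the Bahadur sense under the skew alternative $h(x,\theta)=2f(x)G(\theta x)$ exactly when $f$ is symmetric uniform.
   Context: $F_n$ denotes the empirical distribution function of the sample. The local Bahadur efficiency of $\bar D_n$ under the skew alternative equals $12\sup_s q^2(s)/\sigma^2(f)$, and local asymptotic optimality means that this efficiency equals $1$. *)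

theory Defs
  imports "HOL-Analysis.Analysis"
begin

definition sym_prob_density :: "(real \<Rightarrow> real) \<Rightarrow> bool" where
  "sym_prob_density f \<longleftrightarrow>
     f \<in> borel_measurable borel \<and> (\<forall>x. 0 \<le> f x) \<and>
     integrable lborel f \<and> integral\<^sup>L lborel f = 1 \<and> (\<forall>x. f (- x) = f x)"

definition sigma2 :: "(real \<Rightarrow> real) \<Rightarrow> real" where
  "sigma2 f = (LINT x|lborel. x\<^sup>2 * f x)"

definition vfun :: "(real \<Rightarrow> real) \<Rightarrow> real \<Rightarrow> real" where
  "vfun f x = (LINT u:{..x}|lborel. u * f u)"

definition qfun :: "(real \<Rightarrow> real) \<Rightarrow> real \<Rightarrow> real" where
  "qfun f s = (LINT x:{..s}|lborel. vfun f x * f x)"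

end

theory Submission
  imports Defs "HOL-Probability.Probability"
begin


locale nad = real_distribution +
  assumes noatom: "\<And>x. measure M {x} = 0"
begin

lemma AE_ne: "AE y in M. y \<noteq> u"
proof -
  have "{u} \<in> null_sets M" using noatom[of u]
    by (simp add: null_sets_def emeasure_eq_measure)
  then show ?thesis by (rule AE_I') auto
qed

lemma bnd_int:
  fixes f :: "real \<Rightarrow> real" and B :: real
  assumes "f \<in> borel_measurable M" "\<And>x. \<bar>f x\<bar> \<le> B"
  shows "integrable M f"
  using assms by (intro integrable_const_bound[where B=B]) auto

lemma int_bnd:
  fixes f :: "real \<Rightarrow> real" and B :: real
  assumes "f \<in> borel_measurable M" "\<And>x. \<bar>f x\<bar> \<le> B"
  shows "\<bar>\<integral>x. f x \<partial>M\<bar> \<le> B"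
proof -
  have i: "integrable M f" by (rule bnd_int[OF assms])
  have b: "-B \<le> f x" "f x \<le> B" for x using assms(2)[of x] by (auto simp: abs_le_iff)
  have "(\<integral>x. f x \<partial>M) \<le> B" using b by (intro integral_le_const[OF i]) auto
  moreover have "-B \<le> (\<integral>x. f x \<partial>M)" using b by (intro integral_ge_const[OF i]) auto
  ultimately show ?thesis by auto
qed

lemma sym2:
  assumes A[measurable]: "A \<in> sets borel"
  shows "(\<integral>u. (\<integral>y. (if u\<in>A \<and> y\<in>A \<and> y \<le> u then 1 else 0::real) \<partial>M) \<partial>M) = (measure M A)^2/2"
proof -
  interpret P: pair_prob_space M M by unfold_locales
  define h where "h = (\<lambda>u y. if u\<in>A \<and> y\<in>A \<and> y \<le> u then 1 else 0::real)"
  have hm[measurable]: "(\<lambda>(u,y). h u y) \<in> borel_measurable (M \<Otimes>\<^sub>M M)"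
    unfolding h_def by measurable
  have hint: "integrable (M \<Otimes>\<^sub>M M) (\<lambda>(u,y). h u y)"
    by (rule P.integrable_const_bound[where B=1]) (auto simp: h_def)
  have F: "(\<integral>y. (\<integral>x. h x y \<partial>M) \<partial>M) = (\<integral>x. (\<integral>y. h x y \<partial>M) \<partial>M)"
    by (rule P.Fubini_integral[OF hint])
  have im1[measurable]: "(\<lambda>u. \<integral>y. h u y \<partial>M) \<in> borel_measurable M"
    by measurable
  have im2[measurable]: "(\<lambda>u. \<integral>y. h y u \<partial>M) \<in> borel_measurable M"
    unfolding h_def by measurable
  have i1: "integrable M (\<lambda>u. \<integral>y. h u y \<partial>M)"
    by (rule bnd_int[where B=1]) (simp, rule int_bnd[where B=1], auto simp: h_def)
  have i2: "integrable M (\<lambda>u. \<integral>y. h y u \<partial>M)"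
    by (rule bnd_int[where B=1]) (simp, rule int_bnd[where B=1], auto simp: h_def)
  have inner: "(\<integral>y. h u y \<partial>M) + (\<integral>y. h y u \<partial>M) = indicator A u * measure M A" for u
  proof -
    have "(\<integral>y. h u y \<partial>M) + (\<integral>y. h y u \<partial>M) = (\<integral>y. h u y + h y u \<partial>M)"
    proof -
      have a: "integrable M (h u)" by (rule bnd_int[where B=1]) (auto simp: h_def)
      have b: "integrable M (\<lambda>y. h y u)" by (rule bnd_int[where B=1]) (auto simp: h_def)
      show ?thesis using Bochner_Integration.integral_add[OF a b] by simp
    qed
    also have "\<dots> = (\<integral>y. indicator A u * indicator A y \<partial>M)"
      using AE_ne[of u] by (intro integral_cong_AE) (auto simp: h_def split: split_indicator)
    also have "\<dots> = indicator A u * measure M A" by simp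
    finally show ?thesis .
  qed
  have "(\<integral>u. (\<integral>y. h u y \<partial>M) \<partial>M) + (\<integral>u. (\<integral>y. h y u \<partial>M) \<partial>M)
      = (\<integral>u. (\<integral>y. h u y \<partial>M) + (\<integral>y. h y u \<partial>M) \<partial>M)"
    by (rule Bochner_Integration.integral_add[symmetric, OF i1 i2])
  also have "\<dots> = (\<integral>u. indicator A u * measure M A \<partial>M)" by (simp add: inner)
  also have "\<dots> = (measure M A)^2" by (simp add: power2_eq_square)
  finally have "(\<integral>u. (\<integral>y. h u y \<partial>M) \<partial>M) + (\<integral>u. (\<integral>y. h y u \<partial>M) \<partial>M) = (measure M A)^2" .
  then show ?thesis using F unfolding h_def by simp
qed

lemma C_meas[measurable]: "cdf M \<in> borel_measurable borel"
  by (rule borel_measurable_mono) (auto simp: mono_def cdf_nondecreasing)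

lemma C_meas'[measurable]: "cdf M \<in> borel_measurable M"
  by measurable

lemma cdf_int: "cdf M u = (\<integral>y. (if u\<in>UNIV \<and> y\<in>UNIV \<and> y \<le> u then 1 else 0::real) \<partial>M)"
proof -
  have "(\<lambda>y. if u\<in>UNIV \<and> y\<in>UNIV \<and> y \<le> u then 1 else 0::real) = indicator {..u}"
    by (auto simp: indicator_def fun_eq_iff)
  then show ?thesis by (simp add: cdf_def2)
qed

lemma cdf_01: "0 \<le> cdf M u" "cdf M u \<le> 1"
  by (auto simp: cdf_nonneg cdf_bounded_prob)

lemma prob_atLeast: "measure M {u..} = 1 - cdf M u"
proof -
  have "{u..} = UNIV - {..<u}" by auto
  then have "measure M {u..} = 1 - measure M {..<u}"
    by (simp add: prob_compl[symmetric] del: Diff_UNIV)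
  moreover have "measure M {..u} = measure M {..<u} + measure M {u}"
    by (subst finite_measure_Union[symmetric]) (auto intro!: arg_cong[where f="measure M"])
  ultimately show ?thesis by (simp add: cdf_def2 noatom)
qed

lemma int_C: "(\<integral>u. cdf M u \<partial>M) = 1/2"
  using sym2[of UNIV] prob_space by (simp add: cdf_int[symmetric] del: UNIV_I)

lemma K_eq: "(\<integral>u. (if x \<le> u then cdf M u else 0) \<partial>M) = (1 - (cdf M x)^2) / 2"
proof -
  define A where "A = {x..}"
  have A[measurable]: "A \<in> sets borel" by (simp add: A_def)
  define h1 where "h1 = (\<lambda>u y. if u\<in>A \<and> y\<in>A \<and> y \<le> u then 1 else 0::real)"
  define h2 where "h2 = (\<lambda>u y. if u\<in>A \<and> y\<notin>A then 1 else 0::real)"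
  have pw: "(if x \<le> u then cdf M u else 0) = (\<integral>y. h1 u y \<partial>M) + (\<integral>y. h2 u y \<partial>M)" for u
  proof -
    have a: "integrable M (h1 u)" by (rule bnd_int[where B=1]) (auto simp: h1_def)
    have b: "integrable M (h2 u)" by (rule bnd_int[where B=1]) (auto simp: h2_def)
    have "(\<integral>y. h1 u y \<partial>M) + (\<integral>y. h2 u y \<partial>M) = (\<integral>y. h1 u y + h2 u y \<partial>M)"
      using Bochner_Integration.integral_add[OF a b] by simp
    also have "\<dots> = (if x \<le> u then cdf M u else 0)"
      by (cases "x \<le> u") (auto simp: cdf_int h1_def h2_def A_def intro!: Bochner_Integration.integral_cong)
    finally show ?thesis by simp
  qed
  have i1: "integrable M (\<lambda>u. \<integral>y. h1 u y \<partial>M)"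
    by (rule bnd_int[where B=1]) (simp add: h1_def, rule int_bnd[where B=1], auto simp: h1_def)
  have i2: "integrable M (\<lambda>u. \<integral>y. h2 u y \<partial>M)"
    by (rule bnd_int[where B=1]) (simp add: h2_def, rule int_bnd[where B=1], auto simp: h2_def)
  have e2: "(\<integral>y. h2 u y \<partial>M) = indicator A u * (1 - measure M A)" for u
  proof -
    have "(\<integral>y. h2 u y \<partial>M) = (\<integral>y. indicator A u * indicator (UNIV - A) y \<partial>M)"
      by (intro Bochner_Integration.integral_cong) (auto simp: h2_def split: split_indicator)
    also have "\<dots> = indicator A u * (1 - measure M A)"
      using prob_compl[of A] by simp
    finally show ?thesis .
  qed
  have "(\<integral>u. (if x \<le> u then cdf M u else 0) \<partial>M) = (\<integral>u. (\<integral>y. h1 u y \<partial>M) + (\<integral>y. h2 u y \<partial>M) \<partial>M)"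
    by (simp add: pw)
  also have "\<dots> = (\<integral>u. (\<integral>y. h1 u y \<partial>M) \<partial>M) + (\<integral>u. (\<integral>y. h2 u y \<partial>M) \<partial>M)"
    by (rule Bochner_Integration.integral_add[OF i1 i2])
  also have "(\<integral>u. (\<integral>y. h1 u y \<partial>M) \<partial>M) = (measure M A)^2/2"
    unfolding h1_def by (rule sym2[OF A])
  also have "(\<integral>u. (\<integral>y. h2 u y \<partial>M) \<partial>M) = measure M A * (1 - measure M A)"
    by (simp add: e2)
  also have "measure M A = 1 - cdf M x" by (simp add: A_def prob_atLeast)
  finally show ?thesis by (simp add: power2_eq_square field_simps)
qed

lemma int_C2: "(\<integral>u. (cdf M u)^2 \<partial>M) = 1/3"
proof -
  interpret P: pair_prob_space M M by unfold_locales
  define h where "h = (\<lambda>u x. if x \<le> u then cdf M u else 0::real)"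
  have hint: "integrable (M \<Otimes>\<^sub>M M) (\<lambda>(u,x). h u x)"
  proof (rule P.integrable_const_bound[where B=1])
    show "AE x in M \<Otimes>\<^sub>M M. norm (case x of (u, x) \<Rightarrow> h u x) \<le> 1"
    proof (rule AE_I2, clarsimp)
      fix u x :: real
      show "\<bar>h u x\<bar> \<le> 1" using cdf_01[of u] by (auto simp: h_def)
    qed
    show "(\<lambda>(u,x). h u x) \<in> borel_measurable (M \<Otimes>\<^sub>M M)" unfolding h_def by measurable
  qed
  have F: "(\<integral>x. (\<integral>u. h u x \<partial>M) \<partial>M) = (\<integral>u. (\<integral>x. h u x \<partial>M) \<partial>M)"
    by (rule P.Fubini_integral[OF hint])
  have "(\<integral>x. h u x \<partial>M) = (cdf M u)^2" for u
  proof -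
    have "(\<integral>x. h u x \<partial>M) = (\<integral>x. cdf M u * indicator {..u} x \<partial>M)"
      by (intro Bochner_Integration.integral_cong) (auto simp: h_def)
    also have "\<dots> = (cdf M u)^2" by (simp add: cdf_def2 power2_eq_square)
    finally show ?thesis .
  qed
  then have "(\<integral>u. (cdf M u)^2 \<partial>M) = (\<integral>x. (1 - (cdf M x)^2) / 2 \<partial>M)"
    using F by (simp add: h_def K_eq)
  also have "\<dots> = 1/2 - (\<integral>x. (cdf M x)^2 \<partial>M) / 2"
  proof -
    have i: "integrable M (\<lambda>x. (cdf M x)^2)"
      by (rule bnd_int[where B=1]) (auto simp: abs_le_iff cdf_01 power_le_one)
    show ?thesis using i prob_space by (simp add: diff_divide_distrib)
  qed
  finally show ?thesis by simp
qed

end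


locale nad2 = nad +
  assumes int1: "integrable M (\<lambda>x. x)"
    and int2: "integrable M (\<lambda>x. x^2)"
    and mean0: "(\<integral>x. x \<partial>M) = 0"
begin

definition vv where "vv x = (\<integral>u. (if u \<le> x then u else 0) \<partial>M)"
definition B1 where "B1 = (\<integral>u. \<bar>u\<bar> \<partial>M)"

lemma vv_meas[measurable]: "vv \<in> borel_measurable borel"
  unfolding vv_def by measurable

lemma int_abs: "integrable M (\<lambda>u. \<bar>u\<bar>)"
  using int1 by simp

lemma int_trunc: "integrable M (\<lambda>u. if u \<le> x then u else 0)"
  by (rule Bochner_Integration.integrable_bound[OF int_abs]) auto

lemma vv_bound: "\<bar>vv x\<bar> \<le> B1"
proof -
  have "\<bar>vv x\<bar> \<le> (\<integral>u. \<bar>if u \<le> x then u else 0\<bar> \<partial>M)"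
    unfolding vv_def by (rule integral_abs_bound)
  also have "\<dots> \<le> B1" unfolding B1_def
    by (intro integral_mono int_abs) (auto intro: int_trunc)
  finally show ?thesis .
qed

lemma vv_nonpos: "vv x \<le> 0"
proof (cases "x \<le> 0")
  case True
  then show ?thesis unfolding vv_def by (intro integral_le_const[OF int_trunc] AE_I2) auto
next
  case False
  have a: "integrable M (\<lambda>u. if x < u then u else 0)"
    by (rule Bochner_Integration.integrable_bound[OF int_abs]) auto
  have "vv x + (\<integral>u. (if x < u then u else 0) \<partial>M) = (\<integral>u. u \<partial>M)"
    unfolding vv_def using Bochner_Integration.integral_add[OF int_trunc a]
    by (simp add: if_distrib) (smt (verit, best) Bochner_Integration.integral_cong)
  moreover have "0 \<le> (\<integral>u. (if x < u then u else 0) \<partial>M)"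
    using False by (intro integral_ge_const[OF a] AE_I2) auto
  ultimately show ?thesis using mean0 by simp
qed

lemma int_uC: "integrable M (\<lambda>u. u * cdf M u)"
  by (rule Bochner_Integration.integrable_bound[OF int_abs]) (auto intro!: AE_I2 simp: abs_mult cdf_01 mult_le_cancel_left1 abs_of_nonneg intro: mult_left_le)

lemma Q1: "(\<integral>x. vv x \<partial>M) = - (\<integral>u. u * cdf M u \<partial>M)"
proof -
  interpret P: pair_prob_space M M by unfold_locales
  define F where "F = (\<lambda>x u. if u \<le> x then u else 0::real)"
  have Fm[measurable]: "(\<lambda>(x,u). F x u) \<in> borel_measurable (M \<Otimes>\<^sub>M M)"
    unfolding F_def by measurable
  have Fint: "integrable (M \<Otimes>\<^sub>M M) (\<lambda>(x,u). F x u)"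
  proof (rule P.Fubini_integrable)
    show "integrable M (\<lambda>x. \<integral>u. norm (case (x, u) of (x, u) \<Rightarrow> F x u) \<partial>M)"
    proof (rule bnd_int[where B=B1])
      show "(\<lambda>x. \<integral>u. norm (case (x, u) of (x, u) \<Rightarrow> F x u) \<partial>M) \<in> borel_measurable M"
        unfolding F_def by measurable
      fix x
      have i: "integrable M (\<lambda>u. \<bar>F x u\<bar>)" unfolding F_def using int_trunc by simp
      have "(\<integral>u. \<bar>F x u\<bar> \<partial>M) \<le> B1" unfolding B1_def
        by (intro integral_mono i int_abs) (auto simp: F_def)
      moreover have "0 \<le> (\<integral>u. \<bar>F x u\<bar> \<partial>M)" by simp
      ultimately show "\<bar>\<integral>u. norm (case (x, u) of (x, u) \<Rightarrow> F x u) \<partial>M\<bar> \<le> B1" by simp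
    qed
    show "AE x in M. integrable M (\<lambda>u. case (x, u) of (x, u) \<Rightarrow> F x u)"
      unfolding F_def using int_trunc by simp
  qed simp
  have Fub: "(\<integral>u. (\<integral>x. F x u \<partial>M) \<partial>M) = (\<integral>x. (\<integral>u. F x u \<partial>M) \<partial>M)"
    by (rule P.Fubini_integral[OF Fint])
  have inner: "(\<integral>x. F x u \<partial>M) = u - u * cdf M u" for u
  proof -
    have "(\<integral>x. F x u \<partial>M) = (\<integral>x. u * indicator {u..} x \<partial>M)"
      by (intro Bochner_Integration.integral_cong) (auto simp: F_def)
    also have "\<dots> = u * (1 - cdf M u)" by (simp add: prob_atLeast)
    finally show ?thesis by (simp add: algebra_simps)
  qed
  have "(\<integral>x. vv x \<partial>M) = (\<integral>x. (\<integral>u. F x u \<partial>M) \<partial>M)"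
    unfolding vv_def F_def ..
  also have "\<dots> = (\<integral>u. (\<integral>x. F x u \<partial>M) \<partial>M)" using Fub by simp
  also have "\<dots> = (\<integral>u. u - u * cdf M u \<partial>M)" by (simp only: inner)
  also have "\<dots> = (\<integral>u. u \<partial>M) - (\<integral>u. u * cdf M u \<partial>M)"
    by (rule Bochner_Integration.integral_diff[OF int1 int_uC])
  finally show ?thesis using mean0 by simp
qed

definition PP where "PP = (\<integral>u. u * cdf M u \<partial>M)"
definition S2 where "S2 = (\<integral>u. u^2 \<partial>M)"

lemma iC: "integrable M (cdf M)"
  by (rule bnd_int[where B=1]) (auto simp: abs_le_iff cdf_01 intro: order.trans[OF _ cdf_01(1)])

lemma iC2: "integrable M (\<lambda>u. (cdf M u)^2)"
  by (rule bnd_int[where B=1]) (auto simp: abs_le_iff cdf_01 power_le_one)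

lemma quad_int: "integrable M (\<lambda>u. (t*u - (cdf M u - 1/2))^2)"
proof -
  have eq: "(\<lambda>u. (t*u - (cdf M u - 1/2))^2) = (\<lambda>u. (t^2 * u^2 - 2*t*(u*cdf M u)) + (t*u + (((cdf M u)^2 - cdf M u) + 1/4)))"
    by (simp add: power2_eq_square algebra_simps fun_eq_iff)
  have a: "integrable M (\<lambda>u. t^2 * u^2 - 2*t*(u*cdf M u))" using int2 int_uC by auto
  have b1: "integrable M (\<lambda>u. ((cdf M u)^2 - cdf M u) + 1/4)" using iC iC2 by auto
  have b: "integrable M (\<lambda>u. t*u + (((cdf M u)^2 - cdf M u) + 1/4))" using int1 b1 by auto
  show ?thesis unfolding eq by (rule Bochner_Integration.integrable_add[OF a b])
qed

lemma quad: "(\<integral>u. (t*u - (cdf M u - 1/2))^2 \<partial>M) = t^2 * S2 - 2*t*PP + 1/12"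
proof -
  have eq: "(t*u - (cdf M u - 1/2))^2 = (t^2 * u^2 - 2*t*(u*cdf M u)) + (t*u + (((cdf M u)^2 - cdf M u) + 1/4))" for u
    by (simp add: power2_eq_square algebra_simps)
  have a: "integrable M (\<lambda>u. t^2 * u^2 - 2*t*(u*cdf M u))" using int2 int_uC by auto
  have b1: "integrable M (\<lambda>u. ((cdf M u)^2 - cdf M u) + 1/4)" using iC iC2 by auto
  have b: "integrable M (\<lambda>u. t*u + (((cdf M u)^2 - cdf M u) + 1/4))" using int1 b1 by auto
  have "(\<integral>u. (t*u - (cdf M u - 1/2))^2 \<partial>M) = (\<integral>u. (t^2 * u^2 - 2*t*(u*cdf M u)) + (t*u + (((cdf M u)^2 - cdf M u) + 1/4)) \<partial>M)"
    by (simp only: eq)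
  also have "\<dots> = (\<integral>u. t^2 * u^2 - 2*t*(u*cdf M u) \<partial>M) + (\<integral>u. t*u + (((cdf M u)^2 - cdf M u) + 1/4) \<partial>M)"
    by (rule Bochner_Integration.integral_add[OF a b])
  also have "(\<integral>u. t^2 * u^2 - 2*t*(u*cdf M u) \<partial>M) = t^2 * S2 - 2*t*PP"
    using int2 int_uC by (simp add: S2_def PP_def)
  also have "(\<integral>u. t*u + (((cdf M u)^2 - cdf M u) + 1/4) \<partial>M) = t * (\<integral>u. u \<partial>M) + (\<integral>u. ((cdf M u)^2 - cdf M u) + 1/4 \<partial>M)"
    using int1 b1 by simp
  also have "(\<integral>u. ((cdf M u)^2 - cdf M u) + 1/4 \<partial>M) = 1/12"
    using iC iC2 int_C int_C2 prob_space by simp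
  finally show ?thesis using mean0 by simp
qed

lemma quad_nonneg: "0 \<le> t^2 * S2 - 2*t*PP + 1/12"
  using quad[of t, symmetric] by simp

lemma S2_nonneg: "0 \<le> S2" unfolding S2_def by simp

lemma CS: "12 * PP^2 \<le> S2"
proof (cases "S2 = 0")
  case True
  have "0 \<le> t^2 * S2 - 2*t*PP + 1/12" for t by (rule quad_nonneg)
  show ?thesis
  proof (cases "PP = 0")
    case False
    from quad_nonneg[of "1/(12*PP)"] True False show ?thesis by (simp add: power2_eq_square)
  qed (simp add: True)
next
  case False
  then have pos: "S2 > 0" using S2_nonneg by simp
  have "0 \<le> (PP/S2)^2 * S2 - 2*(PP/S2)*PP + 1/12" by (rule quad_nonneg)
  also have "\<dots> = 1/12 - PP^2/S2" using pos by (simp add: power2_eq_square field_simps)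
  finally show ?thesis using pos by (simp add: field_simps)
qed

lemma CS_eq:
  assumes pos: "S2 > 0" and eq: "12 * PP^2 = S2"
  shows "AE u in M. cdf M u = 1/2 + (PP/S2) * u"
proof -
  define t where "t = PP/S2"
  have "(\<integral>u. (t*u - (cdf M u - 1/2))^2 \<partial>M) = t^2 * S2 - 2*t*PP + 1/12" by (rule quad)
  also have "\<dots> = 1/12 - PP^2/S2" using pos by (simp add: t_def power2_eq_square field_simps)
  also have "\<dots> = 0" using eq pos by (simp add: field_simps)
  finally have z: "(\<integral>u. (t*u - (cdf M u - 1/2))^2 \<partial>M) = 0" .
  have i: "integrable M (\<lambda>u. (t*u - (cdf M u - 1/2))^2)"
    using quad_int by simp
  have "AE u in M. (t*u - (cdf M u - 1/2))^2 = 0"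
    using integral_nonneg_eq_0_iff_AE[OF i] z by simp
  then show ?thesis by (rule AE_mp) (auto simp: t_def intro!: AE_I2)
qed

definition qq where "qq s = (\<integral>x. (if x \<le> s then vv x else 0) \<partial>M)"

lemma ivv_s: "integrable M (\<lambda>x. if P x then vv x else 0)" if [measurable]: "Measurable.pred borel P" for P
proof (rule bnd_int[where B=B1])
  fix x
  have "0 \<le> B1" unfolding B1_def by simp
  then show "\<bar>if P x then vv x else 0\<bar> \<le> B1" using vv_bound[of x] by auto
qed simp

lemma ivv: "integrable M vv"
  using ivv_s[of "\<lambda>x. True"] by simp

lemma Q_eq: "(\<integral>x. vv x \<partial>M) = - PP" using Q1 by (simp add: PP_def)

lemma qq_split: "(\<integral>x. vv x \<partial>M) = qq s + (\<integral>x. (if s < x then vv x else 0) \<partial>M)"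
proof -
  have "(\<integral>x. vv x \<partial>M) = (\<integral>x. (if x \<le> s then vv x else 0) + (if s < x then vv x else 0) \<partial>M)"
    by (intro Bochner_Integration.integral_cong) auto
  also have "\<dots> = qq s + (\<integral>x. (if s < x then vv x else 0) \<partial>M)"
    unfolding qq_def by (rule Bochner_Integration.integral_add) (auto intro!: ivv_s)
  finally show ?thesis .
qed

lemma qq_bounds: "- PP \<le> qq s" "qq s \<le> 0"
proof -
  have "(\<integral>x. (if s < x then vv x else 0) \<partial>M) \<le> 0"
    by (intro integral_le_const ivv_s AE_I2) (auto simp: vv_nonpos)
  then show "- PP \<le> qq s" using qq_split[of s] Q_eq by simp
  show "qq s \<le> 0" unfolding qq_def
    by (intro integral_le_const ivv_s AE_I2) (auto simp: vv_nonpos)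
qed

lemma qq_tail: "\<bar>-PP - qq s\<bar> \<le> B1 * (1 - cdf M s)"
proof -
  have "\<bar>-PP - qq s\<bar> = \<bar>\<integral>x. (if s < x then vv x else 0) \<partial>M\<bar>" using qq_split[of s] Q_eq by simp
  also have "\<dots> \<le> (\<integral>x. \<bar>if s < x then vv x else 0\<bar> \<partial>M)" by (rule integral_abs_bound)
  also have "\<dots> \<le> (\<integral>x. B1 * indicator {s<..} x \<partial>M)"
  proof -
    have "integrable M (indicator {s<..} :: real \<Rightarrow> real)"
      by (rule bnd_int[where B=1]) (auto split: split_indicator)
    then show ?thesis
      by (intro integral_mono) (auto intro!: ivv_s vv_bound split: split_indicator)
  qed
  also have "\<dots> = B1 * measure M {s<..}"
  proof -
    have "integrable M (indicator {s<..} :: real \<Rightarrow> real)"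
      by (rule bnd_int[where B=1]) (auto split: split_indicator)
    then show ?thesis by simp
  qed
  also have "measure M {s<..} = 1 - cdf M s"
    using prob_compl[of "{..s}"] by (simp add: cdf_def2 Compl_eq_Diff_UNIV[symmetric] Compl_atMost)
  finally show ?thesis .
qed

lemma qq_lim: "(qq \<longlongrightarrow> - PP) at_top"
proof -
  have "((\<lambda>s. B1 * (1 - cdf M s)) \<longlongrightarrow> B1 * (1 - 1)) at_top"
    by (intro tendsto_intros cdf_lim_at_top_prob)
  then have "((\<lambda>s. B1 * (1 - cdf M s)) \<longlongrightarrow> 0) at_top" by simp
  then have "((\<lambda>s. qq s - (-PP)) \<longlongrightarrow> 0) at_top"
  proof (rule Lim_null_comparison[rotated])
    show "\<forall>\<^sub>F x in at_top. norm (qq x - - PP) \<le> B1 * (1 - cdf M x)"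
      by (auto intro!: always_eventually) (smt (verit) qq_tail)
  qed
  then have "((\<lambda>s. (qq s - (-PP)) + (-PP)) \<longlongrightarrow> 0 + (-PP)) at_top"
    by (intro tendsto_add tendsto_const)
  then show ?thesis by simp
qed

lemma SUP_qq: "(SUP s. (qq s)^2) = PP^2"
proof (rule antisym)
  have b: "(qq s)^2 \<le> PP^2" for s
    using qq_bounds[of s] by (simp add: abs_le_square_iff[symmetric]) 
  show "(SUP s. (qq s)^2) \<le> PP^2" by (rule cSUP_least) (auto simp: b)
  have bdd: "bdd_above (range (\<lambda>s. (qq s)^2))" using b by (auto intro!: bdd_aboveI2)
  have lim: "((\<lambda>s. (qq s)^2) \<longlongrightarrow> (-PP)^2) at_top" by (intro tendsto_intros qq_lim)
  have "(-PP)^2 \<le> (SUP s. (qq s)^2)"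
    by (rule tendsto_upperbound[OF lim]) (auto intro!: always_eventually cSUP_upper bdd)
  then show "PP^2 \<le> (SUP s. (qq s)^2)" by simp
qed

end


context nad begin

lemma cdf_cont: "continuous_on UNIV (cdf M)"
  using isCont_cdf noatom by (simp add: continuous_on_eq_continuous_at)

lemma cdf_char:
  assumes c: "c > 0" and ae: "AE u in M. cdf M u = 1/2 + c*u"
  shows "cdf M x = max 0 (min 1 (1/2 + c*x))"
proof -
  define D where "D = {u. cdf M u = 1/2 + c*u}"
  have clD: "closed D" unfolding D_def
    by (intro closed_Collect_eq cdf_cont continuous_intros)
  then have Dm[measurable]: "D \<in> sets borel" by (rule borel_closed)
  have nD: "measure M (- D) = 0"
    using ae by (subst prob_eq_0) (auto simp: D_def)
  have z: "measure M Z = 0" if "Z \<in> sets borel" "Z \<subseteq> - D" for Z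
  proof -
    have "measure M Z \<le> measure M (- D)" using that by (intro finite_measure_mono) auto
    then show ?thesis using nD measure_nonneg[of M Z] by simp
  qed
  define L where "L = D \<inter> {..x}"
  define R where "R = D \<inter> {x..}"
  have lo: "cdf M x \<le> 1/2 + c*x" if "L \<noteq> {}"
  proof -
    have bL: "bdd_above L" unfolding L_def by (auto intro: bdd_aboveI[where M=x])
    have clL: "closed L" unfolding L_def using clD by (intro closed_Int) auto
    define d where "d = Sup L"
    have dL: "d \<in> L" unfolding d_def by (rule closed_contains_Sup[OF that bL clL])
    have "cdf M x = cdf M d"
    proof (cases "d < x")
      case True
      have "{d<..x} \<subseteq> - D"
      proof
        fix u assume u: "u \<in> {d<..x}"
        show "u \<in> - D"
        proof
          assume "u \<in> D"
          then have "u \<in> L" using u by (auto simp: L_def)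
          then have "u \<le> d" unfolding d_def by (rule cSup_upper[OF _ bL])
          then show False using u by auto
        qed
      qed
      then have "measure M {d<..x} = 0" by (intro z) auto
      then show ?thesis using cdf_diff_eq[OF True] by simp
    next
      case False
      then show ?thesis using dL by (auto simp: L_def)
    qed
    also have "\<dots> = 1/2 + c*d" using dL by (simp add: L_def D_def)
    also have "\<dots> \<le> 1/2 + c*x" using dL c by (auto simp: L_def)
    finally show ?thesis .
  qed
  have L0: "cdf M x = 0" if "L = {}"
  proof -
    have "{..x} \<subseteq> - D" using that by (auto simp: L_def)
    then show ?thesis by (simp add: cdf_def2 z)
  qed
  have hi: "1/2 + c*x \<le> cdf M x" if "R \<noteq> {}"
  proof -
    have bR: "bdd_below R" unfolding R_def by (auto intro: bdd_belowI[where m=x])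
    have clR: "closed R" unfolding R_def using clD by (intro closed_Int) auto
    define e where "e = Inf R"
    have eR: "e \<in> R" unfolding e_def by (rule closed_contains_Inf[OF that bR clR])
    have "cdf M x = cdf M e"
    proof (cases "x < e")
      case True
      have "{x<..<e} \<subseteq> - D"
      proof
        fix u assume u: "u \<in> {x<..<e}"
        show "u \<in> - D"
        proof
          assume "u \<in> D"
          then have "u \<in> R" using u by (auto simp: R_def)
          then have "e \<le> u" unfolding e_def by (rule cInf_lower[OF _ bR])
          then show False using u by auto
        qed
      qed
      then have "measure M {x<..<e} = 0" by (intro z) auto
      moreover have "measure M {x<..e} = measure M {x<..<e} + measure M {e}"
        using True by (subst finite_measure_Union[symmetric]) (auto intro!: arg_cong[where f="measure M"])
      ultimately show ?thesis using cdf_diff_eq[OF True] noatom[of e] by simp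
    next
      case False
      then show ?thesis using eR by (auto simp: R_def)
    qed
    also have "\<dots> = 1/2 + c*e" using eR by (simp add: R_def D_def)
    finally show ?thesis using eR c by (auto simp: R_def)
  qed
  have R0: "cdf M x = 1" if "R = {}"
  proof -
    have "{x..} \<subseteq> - D" using that by (auto simp: R_def)
    then have "measure M {x..} = 0" by (intro z) auto
    then show ?thesis using prob_atLeast[of x] by simp
  qed
  have "\<not> (L = {} \<and> R = {})"
  proof
    assume "L = {} \<and> R = {}"
    then have "UNIV \<subseteq> - D"
    proof (intro subsetI)
      fix u assume e: "L = {} \<and> R = {}"
      show "u \<in> - D"
      proof (cases "u \<le> x")
        case True then show ?thesis using e by (auto simp: L_def)
      next
        case False then show ?thesis using e by (auto simp: R_def)
      qed
    qed
    then have "measure M UNIV = 0" by (intro z) auto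
    then show False using prob_space by simp
  qed
  then show ?thesis using lo L0 hi R0 cdf_01[of x] by (cases "L = {}"; cases "R = {}") auto
qed

end


definition f0 :: "real \<Rightarrow> real \<Rightarrow> real" where
  "f0 a x = indicator {-a..a} x / (2*a)"

definition UN0 :: "real \<Rightarrow> real measure" where
  "UN0 a = density lborel (\<lambda>x. ennreal (f0 a x))"

lemma f0_meas[measurable]: "f0 a \<in> borel_measurable borel"
  unfolding f0_def by measurable

lemma UN0_emeasure:
  assumes a: "a > 0" and A[measurable]: "A \<in> sets borel"
  shows "emeasure (UN0 a) A = ennreal (1/(2*a)) * emeasure lborel (A \<inter> {-a..a})"
proof -
  have "emeasure (UN0 a) A = (\<integral>\<^sup>+ x. ennreal (f0 a x) * indicator A x \<partial>lborel)"
    unfolding UN0_def by (rule emeasure_density) auto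
  also have "\<dots> = (\<integral>\<^sup>+ x. ennreal (1/(2*a)) * indicator (A \<inter> {-a..a}) x \<partial>lborel)"
    by (intro nn_integral_cong) (auto simp: f0_def split: split_indicator)
  also have "\<dots> = ennreal (1/(2*a)) * emeasure lborel (A \<inter> {-a..a})"
    by (rule nn_integral_cmult_indicator) auto
  finally show ?thesis .
qed

lemma UN0_sets[simp]: "sets (UN0 a) = sets borel"
  by (simp add: UN0_def)

lemma UN0_rd:
  assumes a: "a > 0"
  shows "real_distribution (UN0 a)"
proof -
  have "emeasure (UN0 a) UNIV = ennreal (1/(2*a)) * emeasure lborel {-a..a}"
    using UN0_emeasure[OF a, of UNIV] by simp
  also have "\<dots> = 1" using a by (simp add: ennreal_mult[symmetric])
  finally have "prob_space (UN0 a)"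
    by (intro prob_spaceI) (simp add: UN0_def)
  then show ?thesis by (simp add: real_distribution_def real_distribution_axioms_def)
qed

lemma UN0_cdf:
  assumes a: "a > 0"
  shows "cdf (UN0 a) x = max 0 (min 1 (1/2 + (1/(2*a))*x))"
proof -
  have e: "emeasure (UN0 a) {..x} = ennreal (1/(2*a)) * emeasure lborel ({..x} \<inter> {-a..a})"
    using UN0_emeasure[OF a, of "{..x}"] by simp
  consider "x < -a" | "-a \<le> x" "x \<le> a" | "a < x" by linarith
  then show ?thesis
  proof cases
    case 1
    then have "{..x} \<inter> {-a..a} = {}" by auto
    then show ?thesis using e 1 a by (simp add: cdf_def measure_def field_simps)
  next
    case 2
    then have "{..x} \<inter> {-a..a} = {-a..x}" by auto
    then have "measure (UN0 a) {..x} = (1/(2*a)) * (x + a)"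
      using e 2 a by (simp add: measure_def ennreal_mult[symmetric] enn2real_mult)
    moreover have "(1/(2*a)) * (x + a) = 1/2 + (1/(2*a))*x" using a by (simp add: field_simps)
    moreover have "0 \<le> 1/2 + (1/(2*a))*x" "1/2 + (1/(2*a))*x \<le> 1" using 2 a by (auto simp: field_simps)
    ultimately show ?thesis by (simp add: cdf_def)
  next
    case 3
    then have "{..x} \<inter> {-a..a} = {-a..a}" by auto
    then have "measure (UN0 a) {..x} = (1/(2*a)) * (2*a)"
      using e 3 a by (simp add: measure_def ennreal_mult[symmetric] enn2real_mult)
    moreover have "1 \<le> 1/2 + (1/(2*a))*x" using 3 a by (auto simp: field_simps)
    ultimately show ?thesis using a by (simp add: cdf_def)
  qed
qed

lemma UN0_AE:
  assumes a: "a > 0"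
  shows "AE x in UN0 a. -a \<le> x \<and> x \<le> a"
  unfolding UN0_def by (subst AE_density) (auto simp: f0_def split: split_indicator)

lemma UN0_var:
  assumes a: "a > 0"
  shows "(\<integral>x. x^2 \<partial>UN0 a) = a^2/3"
proof -
  have "(\<integral>x. x^2 \<partial>UN0 a) = (\<integral>x. f0 a x *\<^sub>R x^2 \<partial>lborel)"
    unfolding UN0_def by (rule integral_density) (use a in \<open>auto intro!: AE_I2 simp: f0_def\<close>)
  also have "\<dots> = (1/(2*a)) * (\<integral>x. indicator {-a..a} x *\<^sub>R x^2 \<partial>lborel)"
    by (simp add: f0_def mult.commute)
  also have "(\<integral>x. indicator {-a..a} x *\<^sub>R x^2 \<partial>lborel) = a^3/3 - (-a)^3/3"
    by (rule integral_FTC_atLeastAtMost[where F="\<lambda>x. x^3/3"])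
       (use a in \<open>auto intro!: derivative_eq_intros continuous_intros simp: has_real_derivative_iff_has_vector_derivative[symmetric]\<close>)
  finally show ?thesis using a by (simp add: field_simps power2_eq_square power3_eq_cube)
qed



context nad2 begin

lemma PP_nonneg: "0 \<le> PP" using qq_bounds[of 0] by simp

lemma eq_rev:
  assumes t: "t > 0" and ae: "AE u in M. cdf M u = 1/2 + t*u" and s: "S2 = 1/(12*t^2)"
  shows "12*PP^2 = S2"
proof -
  have "AE u in M. (t*u - (cdf M u - 1/2))^2 = 0" using ae by (rule AE_mp) (auto intro!: AE_I2)
  then have "(\<integral>u. (t*u - (cdf M u - 1/2))^2 \<partial>M) = (\<integral>u. 0 \<partial>M)"
    by (intro integral_cong_AE) auto
  then have "t^2 * S2 - 2*t*PP + 1/12 = 0" using quad[of t] by simp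
  then have "2*t*PP = 1/6" using s t by (simp add: field_simps)
  then have "PP = 1/(12*t)" using t by (simp add: field_simps)
  then have "12*PP^2 = 12*(1/(12*t))^2" by simp
  also have "\<dots> = 1/(12*t^2)" using t by (simp add: power2_eq_square field_simps)
  finally show ?thesis using s by simp
qed

end

theorem mainTheorem2:
  fixes f :: "real \<Rightarrow> real"
  assumes dens: "sym_prob_density f"
    and finvar: "integrable lborel (\<lambda>x. x\<^sup>2 * f x)"
    and pos: "sigma2 f > 0"
  shows "12 * (SUP s. (qfun f s)\<^sup>2) \<le> sigma2 f \<and>
         (12 * (SUP s. (qfun f s)\<^sup>2) = sigma2 f \<longleftrightarrow>
           (\<exists>a>0. AE x in lborel. f x = indicator {-a..a} x / (2 * a)))"
proof -
  from dens have fm[measurable]: "f \<in> borel_measurable borel" and fnn: "\<And>x. 0 \<le> f x"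
    and fint: "integrable lborel f" and f1: "integral\<^sup>L lborel f = 1" and fsym: "\<And>x. f (-x) = f x"
    unfolding sym_prob_density_def by auto
  define M where "M = density lborel (\<lambda>x. ennreal (f x))"
  have sM: "sets M = sets borel" by (simp add: M_def)
  have "emeasure M UNIV = (\<integral>\<^sup>+ x. ennreal (f x) * indicator UNIV x \<partial>lborel)"
    unfolding M_def by (rule emeasure_density) auto
  also have "\<dots> = ennreal (\<integral>x. f x \<partial>lborel)"
    by (simp add: nn_integral_eq_integral[OF fint] fnn)
  also have "\<dots> = 1" using f1 by simp
  finally have "prob_space M" by (intro prob_spaceI) (simp add: M_def)
  then have rd: "real_distribution M" using sM by (simp add: real_distribution_def real_distribution_axioms_def)
  have na: "measure M {x} = 0" for x
  proof -
    have "emeasure M {x} = (\<integral>\<^sup>+ y. ennreal (f y) * indicator {x} y \<partial>lborel)"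
      unfolding M_def by (rule emeasure_density) auto
    also have "\<dots> = 0"
      by (rule nn_integral_null_set) auto
    finally show ?thesis by (simp add: measure_def)
  qed
  interpret nad M using rd na by (simp add: nad_def nad_axioms_def)
  have i1: "integrable M (\<lambda>x. x)"
  proof -
    have "integrable lborel (\<lambda>x. f x + x^2 * f x)" using fint finvar by auto
    then have "integrable lborel (\<lambda>x. f x *\<^sub>R x)"
    proof (rule Bochner_Integration.integrable_bound)
      show "AE x in lborel. norm (f x *\<^sub>R x) \<le> norm (f x + x^2 * f x)"
      proof (rule AE_I2)
        fix x :: real
        have "0 \<le> (\<bar>x\<bar> - 1)^2 + \<bar>x\<bar>" by (intro add_nonneg_nonneg zero_le_power2 abs_ge_zero)
        moreover have "(\<bar>x\<bar> - 1)^2 + \<bar>x\<bar> = 1 + x^2 - \<bar>x\<bar>"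
          by (simp add: power2_eq_square algebra_simps abs_mult_self_eq)
        ultimately have "\<bar>x\<bar> \<le> 1 + x^2" by linarith
        then have "f x * \<bar>x\<bar> \<le> f x * (1 + x^2)" using fnn[of x] by (intro mult_left_mono) auto
        then show "norm (f x *\<^sub>R x) \<le> norm (f x + x^2 * f x)"
          using fnn[of x] by (simp add: abs_mult algebra_simps)
      qed
    qed simp
    then show ?thesis unfolding M_def by (subst integrable_density) (auto simp: fnn)
  qed
  have i2: "integrable M (\<lambda>x. x^2)"
    unfolding M_def using finvar by (subst integrable_density) (auto simp: fnn mult.commute)
  have m0: "(\<integral>x. x \<partial>M) = 0"
  proof -
    have e: "(\<integral>x. x \<partial>M) = (\<integral>x. f x *\<^sub>R x \<partial>lborel)"
      unfolding M_def by (rule integral_density) (auto simp: fnn)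
    have "(\<integral>x. f x *\<^sub>R x \<partial>lborel) = \<bar>-1\<bar> *\<^sub>R (\<integral>x. f (0 + -1 * x) *\<^sub>R (0 + -1 * x) \<partial>lborel)"
      by (rule lborel_integral_real_affine) simp
    also have "\<dots> = - (\<integral>x. f x *\<^sub>R x \<partial>lborel)" by (simp add: fsym)
    finally show ?thesis using e by simp
  qed
  interpret nad2 M using i1 i2 m0 by unfold_locales
  have intM: "(\<integral>x. g x \<partial>M) = (\<integral>x. f x *\<^sub>R g x \<partial>lborel)" if "g \<in> borel_measurable borel" for g :: "real \<Rightarrow> real"
    unfolding M_def by (rule integral_density) (auto simp: fnn that)
  have sig: "sigma2 f = S2"
  proof -
    have "(\<integral>x. x^2 \<partial>M) = (\<integral>x. f x *\<^sub>R x^2 \<partial>lborel)"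
      unfolding M_def by (rule integral_density) (auto simp: fnn)
    then have "S2 = (\<integral>x. f x *\<^sub>R x^2 \<partial>lborel)" by (simp add: S2_def)
    then show ?thesis by (simp add: sigma2_def mult.commute)
  qed
  have vf: "vfun f x = vv x" for x
  proof -
    have "(\<integral>u. (if u \<le> x then u else 0) \<partial>M) = (\<integral>u. f u *\<^sub>R (if u \<le> x then u else 0) \<partial>lborel)"
      unfolding M_def by (rule integral_density) (auto simp: fnn)
    then have "vv x = (\<integral>u. f u *\<^sub>R (if u \<le> x then u else 0) \<partial>lborel)" by (simp add: vv_def)
    also have "\<dots> = vfun f x" unfolding vfun_def set_lebesgue_integral_def
      by (intro Bochner_Integration.integral_cong) (auto simp: indicator_def)
    finally show ?thesis by simp
  qed
  have qf: "qfun f s = qq s" for s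
  proof -
    have "(\<integral>x. (if x \<le> s then vv x else 0) \<partial>M) = (\<integral>x. f x *\<^sub>R (if x \<le> s then vv x else 0) \<partial>lborel)"
      by (rule intM) measurable
    then have "qq s = (\<integral>x. f x *\<^sub>R (if x \<le> s then vv x else 0) \<partial>lborel)" by (simp add: qq_def)
    also have "\<dots> = qfun f s" unfolding qfun_def set_lebesgue_integral_def
      by (intro Bochner_Integration.integral_cong) (auto simp: indicator_def vf)
    finally show ?thesis by simp
  qed
  have SUPeq: "(SUP s. (qfun f s)\<^sup>2) = PP^2" using SUP_qq by (simp add: qf)
  have part1: "12 * (SUP s. (qfun f s)\<^sup>2) \<le> sigma2 f" using CS by (simp add: SUPeq sig)
  have part2: "12 * PP^2 = S2 \<longleftrightarrow> (\<exists>a>0. AE x in lborel. f x = indicator {-a..a} x / (2 * a))"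
  proof
    assume eq: "12 * PP^2 = S2"
    have S2p: "S2 > 0" using pos sig by simp
    have PPp: "PP > 0" using PP_nonneg eq S2p by (cases "PP = 0") auto
    define c where "c = PP/S2"
    have cp: "c > 0" using PPp S2p by (simp add: c_def)
    have ae: "AE u in M. cdf M u = 1/2 + c*u" unfolding c_def by (rule CS_eq[OF S2p eq])
    define a where "a = 1/(2*c)"
    have ap: "a > 0" using cp by (simp add: a_def)
    have ca: "1/(2*a) = c" using cp by (simp add: a_def)
    have "cdf M = cdf (UN0 a)"
      using cdf_char[OF cp ae] UN0_cdf[OF ap] by (simp add: ca fun_eq_iff)
    then have "M = UN0 a" by (rule cdf_unique[OF rd UN0_rd[OF ap]])
    then have dd: "density lborel (\<lambda>x. ennreal (f x)) = density lborel (\<lambda>x. ennreal (f0 a x))"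
      by (simp add: M_def UN0_def)
    have "AE x in lborel. ennreal (f x) = ennreal (f0 a x)"
      by (rule sigma_finite_measure.density_unique[OF sigma_finite_lborel _ _ dd]) auto
    then have "AE x in lborel. f x = indicator {-a..a} x / (2 * a)"
      by (rule AE_mp) (use ap fnn in \<open>auto intro!: AE_I2 simp: f0_def\<close>)
    then show "\<exists>a>0. AE x in lborel. f x = indicator {-a..a} x / (2 * a)" using ap by blast
  next
    assume "\<exists>a>0. AE x in lborel. f x = indicator {-a..a} x / (2 * a)"
    then obtain a where ap: "a > 0" and ae: "AE x in lborel. f x = indicator {-a..a} x / (2 * a)" by blast
    have ae': "AE x in lborel. ennreal (f x) = ennreal (f0 a x)"
      using ae by (rule AE_mp) (auto simp: f0_def intro!: AE_I2)
    have MU: "M = UN0 a" unfolding M_def UN0_def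
      by (rule density_cong[OF _ _ ae']) auto
    define t where "t = 1/(2*a)"
    have tp: "t > 0" using ap by (simp add: t_def)
    have "AE u in M. cdf M u = 1/2 + t*u"
      unfolding MU using UN0_AE[OF ap]
      by (rule AE_mp) (use ap in \<open>auto intro!: AE_I2 simp: UN0_cdf t_def field_simps\<close>)
    moreover have "S2 = 1/(12*t^2)"
    proof -
      have "S2 = (\<integral>x. x^2 \<partial>M)" by (simp add: S2_def)
      also have "\<dots> = a^2/3" using UN0_var[OF ap] MU by simp
      finally show ?thesis using ap by (simp add: t_def field_simps power2_eq_square)
    qed
    ultimately show "12 * PP^2 = S2" by (rule eq_rev[OF tp])
  qed
  show ?thesis using part1 part2 by (simp add: SUPeq sig)
qed


end
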